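(* Let $G$ be a second countable, locally compact, Hausdorff groupoid with a Haar system, and let $G'$ be an open subgroupoid of $G$ with $G^{0}\subseteq G'$. Let $\Delta=G\setminus G'$ and suppose the inclusion is regular, i.e. the map $r:\Delta\to r(\Delta)$ is open when $r(\Delta)$ is given the quotient topology from $r|_{\Delta}$. Let $\Delta^{2}=(\Delta\times\Delta)\cap G^{2}$ and $\mu:G^{2}\to G$ the product. Then $\Delta^{2}\cap\mu^{-1}(G')$ is closed in $\Delta^{2}$.
   Context: $G^{2}\subseteq G\times G$ denotes the set of composable pairs. *)

theory Defs
  imports "HOL-Analysis.Analysis" "HOL-Probability.Probability"
begin

text \<open>A groupoid whose arrows are all elements of the type 'g, given by range map r,
 source (domain) map d, partially defined multiplication m (meaningful on composable
 pairs, i.e. d x = r y) and inverse i.\<close>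

definition composable :: "('g \<Rightarrow> 'g) \<Rightarrow> ('g \<Rightarrow> 'g) \<Rightarrow> ('g \<times> 'g) set" where
  "composable r d = {(x, y). d x = r y}"

definition units :: "('g \<Rightarrow> 'g) \<Rightarrow> 'g set" where
  "units r = range r"

definition groupoid :: "('g \<Rightarrow> 'g) \<Rightarrow> ('g \<Rightarrow> 'g) \<Rightarrow> ('g \<Rightarrow> 'g \<Rightarrow> 'g) \<Rightarrow> ('g \<Rightarrow> 'g) \<Rightarrow> bool" where
  "groupoid r d m i \<longleftrightarrow>
     (\<forall>x. r (r x) = r x \<and> d (r x) = r x \<and> r (d x) = d x \<and> d (d x) = d x) \<and>
     (\<forall>x y. d x = r y \<longrightarrow> r (m x y) = r x \<and> d (m x y) = d y) \<and>
     (\<forall>x y z. d x = r y \<and> d y = r z \<longrightarrow> m (m x y) z = m x (m y z)) \<and>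
     (\<forall>x. m (r x) x = x \<and> m x (d x) = x) \<and>
     (\<forall>x. r (i x) = d x \<and> d (i x) = r x \<and> m x (i x) = r x \<and> m (i x) x = d x)"

definition topological_groupoid ::
  "('g::topological_space \<Rightarrow> 'g) \<Rightarrow> ('g \<Rightarrow> 'g) \<Rightarrow> ('g \<Rightarrow> 'g \<Rightarrow> 'g) \<Rightarrow> ('g \<Rightarrow> 'g) \<Rightarrow> bool" where
  "topological_groupoid r d m i \<longleftrightarrow> groupoid r d m i \<and>
     continuous_on (composable r d) (\<lambda>p. m (fst p) (snd p)) \<and> continuous_on UNIV i"

definition compactly_supported :: "('g::topological_space \<Rightarrow> real) \<Rightarrow> bool" where
  "compactly_supported f \<longleftrightarrow> continuous_on UNIV f \<and> compact (closure {x. f x \<noteq> 0})"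

text \<open>A (left) Haar system: a family of Radon measures lam u (u a unit) on the Borel sets
 of G, with support exactly G^u = r^{-1}(u), continuous and left invariant.\<close>
definition haar_system ::
  "('g::topological_space \<Rightarrow> 'g) \<Rightarrow> ('g \<Rightarrow> 'g) \<Rightarrow> ('g \<Rightarrow> 'g \<Rightarrow> 'g) \<Rightarrow> ('g \<Rightarrow> 'g measure) \<Rightarrow> bool" where
  "haar_system r d m lam \<longleftrightarrow>
     (\<forall>u\<in>units r. sets (lam u) = sets borel) \<and>
     (\<forall>u\<in>units r. \<forall>K. compact K \<longrightarrow> emeasure (lam u) K < \<infinity>) \<and>
     (\<forall>u\<in>units r. \<forall>K. compact K \<longrightarrow>
        emeasure (lam u) K = (INF U\<in>{U. open U \<and> K \<subseteq> U}. emeasure (lam u) U)) \<and>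
     (\<forall>u\<in>units r. \<forall>U. open U \<longrightarrow>
        emeasure (lam u) U = (SUP K\<in>{K. compact K \<and> K \<subseteq> U}. emeasure (lam u) K)) \<and>
     (\<forall>u\<in>units r. \<forall>U. open U \<longrightarrow> (emeasure (lam u) U = 0 \<longleftrightarrow> U \<inter> r -` {u} = {})) \<and>
     (\<forall>f. compactly_supported f \<longrightarrow>
        continuous_on (units r) (\<lambda>u. integral\<^sup>L (lam u) f)) \<and>
     (\<forall>f x. compactly_supported f \<longrightarrow>
        (\<integral>y. f (m x y) \<partial>lam (d x)) = (\<integral>y. f y \<partial>lam (r x)))"

definition subgroupoid ::
  "('g \<Rightarrow> 'g) \<Rightarrow> ('g \<Rightarrow> 'g) \<Rightarrow> ('g \<Rightarrow> 'g \<Rightarrow> 'g) \<Rightarrow> ('g \<Rightarrow> 'g) \<Rightarrow> 'g set \<Rightarrow> bool" where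
  "subgroupoid r d m i H \<longleftrightarrow>
     (\<forall>x\<in>H. \<forall>y\<in>H. d x = r y \<longrightarrow> m x y \<in> H) \<and> (\<forall>x\<in>H. i x \<in> H)"

text \<open>The restriction r : D \<rightarrow> r(D) is an open map when r(D) carries the quotient
 topology induced by r restricted to D (a set W \<subseteq> r(D) is open iff D \<inter> r^{-1}(W)
 is open in D).\<close>
definition regular_inclusion :: "('g::topological_space \<Rightarrow> 'g) \<Rightarrow> 'g set \<Rightarrow> bool" where
  "regular_inclusion r D \<longleftrightarrow>
     (\<forall>V. openin (top_of_set D) V \<longrightarrow> openin (top_of_set D) (D \<inter> r -` (r ` V)))"

end

theory Submission
  imports Defs
begin

theorem lemma6p35:
  fixes r d :: "'g::{t2_space, second_countable_topology} \<Rightarrow> 'g"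
    and m :: "'g \<Rightarrow> 'g \<Rightarrow> 'g" and i :: "'g \<Rightarrow> 'g"
    and lam :: "'g \<Rightarrow> 'g measure" and G' :: "'g set"
  assumes "topological_groupoid r d m i"
    and "locally_compact_space (euclidean :: 'g topology)"
    and "haar_system r d m lam"
    and "subgroupoid r d m i G'" and "open G'" and "units r \<subseteq> G'"
    and "regular_inclusion r (- G')"
  shows "closedin (top_of_set (((- G') \<times> (- G')) \<inter> composable r d))
           (((- G') \<times> (- G')) \<inter> composable r d \<inter> {p. m (fst p) (snd p) \<in> G'})"
proof -
  let ?D = "- G'"
  let ?S = "(?D \<times> ?D) \<inter> composable r d"
  let ?T = "?S \<inter> {p. m (fst p) (snd p) \<in> G'}"
  have grp: "groupoid r d m i" and mc: "continuous_on (composable r d) (\<lambda>p. m (fst p) (snd p))"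
    and ic: "continuous_on UNIV i"
    using assms(1) unfolding topological_groupoid_def by auto
  have sub1: "\<And>x y. x \<in> G' \<Longrightarrow> y \<in> G' \<Longrightarrow> d x = r y \<Longrightarrow> m x y \<in> G'"
    and sub2: "\<And>x. x \<in> G' \<Longrightarrow> i x \<in> G'"
    using assms(4) unfolding subgroupoid_def by auto
  have g1: "\<And>x. r (r x) = r x \<and> d (r x) = r x \<and> r (d x) = d x \<and> d (d x) = d x"
    and g2: "\<And>x y. d x = r y \<Longrightarrow> r (m x y) = r x \<and> d (m x y) = d y"
    and g3: "\<And>x y z. d x = r y \<Longrightarrow> d y = r z \<Longrightarrow> m (m x y) z = m x (m y z)"
    and g4: "\<And>x. m (r x) x = x \<and> m x (d x) = x"
    and g5: "\<And>x. r (i x) = d x \<and> d (i x) = r x \<and> m x (i x) = r x \<and> m (i x) x = d x"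
    using grp unfolding groupoid_def by blast+
  let ?E = "{p. r (fst p) = r (snd p)}"
  let ?phi = "\<lambda>p. m (i (fst p)) (snd p)"
  have phic: "continuous_on ?E ?phi"
  proof -
    have "continuous_on ?E (\<lambda>p. (i (fst p), snd p))"
      by (intro continuous_on_Pair continuous_on_compose2[OF ic] continuous_on_fst continuous_on_snd continuous_on_id) auto
    moreover have "(\<lambda>p. (i (fst p), snd p)) ` ?E \<subseteq> composable r d"
      using g5 by (auto simp: composable_def)
    ultimately show ?thesis
      using continuous_on_compose2[OF mc, of ?E "\<lambda>p. (i (fst p), snd p)"] by simp
  qed
  have "openin (top_of_set ?S) (?S - ?T)"
  proof (subst openin_subopen, intro ballI)
    fix p assume p: "p \<in> ?S - ?T"
    obtain x y where pxy: "p = (x, y)" by (cases p)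
    define z where "z = m x y"
    have xD: "x \<in> ?D" and yD: "y \<in> ?D" and cxy: "d x = r y" and zD: "z \<notin> G'"
      using p by (auto simp: pxy composable_def z_def)
    have rz: "r z = r x" using g2[OF cxy] z_def by simp
    have "d z \<in> G'" using assms(6) g1 unfolding units_def by (metis rangeI subsetD)
    then have "?phi (z, z) \<in> G'" using g5 by simp
    obtain A where A: "open A" "A \<inter> ?E = ?phi -` G' \<inter> ?E"
      using phic assms(5) unfolding continuous_on_open_invariant by blast
    have "(z, z) \<in> A" using A \<open>?phi (z, z) \<in> G'\<close> by auto
    then obtain U1 U2 where U: "open U1" "open U2" "(z,z) \<in> U1 \<times> U2" "U1 \<times> U2 \<subseteq> A"
      using open_prod_elim[OF A(1)] by metis
    define U where "U = U1 \<inter> U2"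
    have Uo: "open U" and zU: "z \<in> U" using U by (auto simp: U_def)
    have keyU: "\<And>g v. g \<in> U \<Longrightarrow> v \<in> U \<Longrightarrow> r g = r v \<Longrightarrow> m (i g) v \<in> G'"
    proof -
      fix g v assume "g \<in> U" "v \<in> U" "r g = r v"
      then have "(g, v) \<in> A \<inter> ?E" using U by (auto simp: U_def)
      then show "m (i g) v \<in> G'" using A(2) by auto
    qed
    define V where "V = ?D \<inter> U"
    have "openin (top_of_set ?D) V" unfolding V_def using Uo by (auto simp: openin_open)
    then have "openin (top_of_set ?D) (?D \<inter> r -` (r ` V))"
      using assms(7) unfolding regular_inclusion_def by blast
    then obtain Q where Q: "open Q" "?D \<inter> r -` (r ` V) = ?D \<inter> Q"
      unfolding openin_open by blast
    have xO: "x \<in> Q"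
    proof -
      have "z \<in> V" using zD zU by (auto simp: V_def)
      then have "x \<in> ?D \<inter> r -` (r ` V)" using xD rz by (metis IntI image_eqI vimageI)
      then show ?thesis using Q(2) by blast
    qed
    obtain P where P: "open P" "P \<inter> composable r d = (\<lambda>p. m (fst p) (snd p)) -` U \<inter> composable r d"
      using mc Uo unfolding continuous_on_open_invariant by blast
    have pP: "p \<in> P" using P(2) zU cxy by (auto simp: pxy z_def composable_def)
    define W where "W = ?S \<inter> ((Q \<times> UNIV) \<inter> P)"
    have "openin (top_of_set ?S) W" unfolding W_def openin_open
      using Q(1) P(1) by (intro exI[of _ "(Q \<times> UNIV) \<inter> P"]) (auto intro: open_Times)
    moreover have "p \<in> W" using p pP xO by (auto simp: W_def pxy)
    moreover have "W \<subseteq> ?S - ?T"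
    proof
      fix q assume q: "q \<in> W"
      obtain a b where qab: "q = (a, b)" by (cases q)
      have aD: "a \<in> ?D" and cab: "d a = r b" and aO: "a \<in> Q" and qS: "q \<in> ?S"
        using q by (auto simp: W_def qab composable_def)
      have "q \<in> P \<inter> composable r d" using q by (auto simp: W_def)
      then have gU: "m a b \<in> U" using P(2) by (auto simp: qab)
      show "q \<in> ?S - ?T"
      proof (rule ccontr)
        assume "q \<notin> ?S - ?T"
        then have gG: "m a b \<in> G'" using qS by (auto simp: qab)
        define g where "g = m a b"
        have "a \<in> ?D \<inter> r -` (r ` V)" using aD aO Q(2) by blast
        then obtain v where vV: "v \<in> V" and rv: "r a = r v" by auto
        have rg: "r g = r v" using g2[OF cab] rv g_def by simp
        have h: "m (i g) v \<in> G'" using keyU gU vV rg by (auto simp: V_def g_def)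
        have "m g (m (i g) v) \<in> G'"
          using sub1[OF gG[folded g_def] h] g5 g2 rg by (metis)
        moreover have "m g (m (i g) v) = v"
        proof -
          have "m g (m (i g) v) = m (m g (i g)) v" using g3[of g "i g" v] g5 rg by metis
          also have "... = m (r v) v" using g5 rg by metis
          also have "... = v" using g4 by metis
          finally show ?thesis .
        qed
        ultimately have "v \<in> G'" by simp
        then show False using vV by (auto simp: V_def)
      qed
    qed
    ultimately show "\<exists>T. openin (top_of_set ?S) T \<and> p \<in> T \<and> T \<subseteq> ?S - ?T" by blast
  qed
  then show ?thesis unfolding closedin_def by auto
qed

end
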